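(* Let $1 \leq k \leq n$, let $l, u \in \mathbb{R}^n$ with $l_i \leq u_i$ for all $i$, and let $x \in \mathbb{R}^n$ satisfy $l_i \leq x_i \leq u_i$ for all $i$. Put $L = Q_k(l)$. Then for every subset $W \subseteq \{1, \ldots, n\}$ with $|W| \geq k$ and every real $U > L$, $$Q_k(x) \geq L + \frac{U - L}{|W| - k + 1}\left(\sum_{i \in W} \frac{x_i - L}{\max(U, u_i) - L} - k + 1\right).$$
   Context: For $y \in \mathbb{R}^n$ and an integer $1 \leq k \leq n$, $Q_k(y)$ denotes the $k$-th largest entry of $y$ (entries counted with multiplicity). *)

theory Defs
  imports "HOL-Analysis.Analysis" "HOL-Library.Multiset"
begin

definition kth_largest :: "nat \<Rightarrow> real ^ 'n \<Rightarrow> real" where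
  "kth_largest k y =
     rev (sorted_list_of_multiset (image_mset (\<lambda>i. y $ i) (mset_set (UNIV :: 'n set)))) ! (k - 1)"

end

theory Submission
  imports Defs
begin

lemma card_filter_sorted:
  fixes y :: "real ^ 'n"
  defines "xs \<equiv> sorted_list_of_multiset (image_mset (\<lambda>i. y $ i) (mset_set (UNIV :: 'n set)))"
  shows "card {i. P (y $ i)} = length (filter P xs)" and "length xs = CARD('n)" and "sorted xs"
proof -
  have "length (filter P xs) = size (filter_mset P (mset xs))" by (metis mset_filter size_mset)
  also have "\<dots> = card {i. P (y $ i)}"
    unfolding xs_def by (simp add: filter_mset_image_mset filter_mset_mset_set)
  finally show "card {i. P (y $ i)} = length (filter P xs)" by simp
  have "length xs = size (mset xs)" by simp
  then show "length xs = CARD('n)" unfolding xs_def by simp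
  show "sorted xs" unfolding xs_def by simp
qed

lemma kth_props:
  fixes y :: "real ^ 'n"
  assumes "1 \<le> k" "k \<le> CARD('n)"
  shows "card {i. y $ i > kth_largest k y} \<le> k - 1"
    and "card {i. y $ i \<ge> kth_largest k y} \<ge> k"
proof -
  define xs where "xs \<equiv> sorted_list_of_multiset (image_mset (\<lambda>i. y $ i) (mset_set (UNIV :: 'n set)))"
  define n where "n = CARD('n)"
  have len: "length xs = n" and so: "sorted xs" using card_filter_sorted[where y=y] unfolding xs_def n_def by auto
  define j where "j = n - k"
  have Q: "kth_largest k y = xs ! j"
    unfolding kth_largest_def xs_def[symmetric] j_def using assms len n_def
    by (simp add: rev_nth)
  have jn: "j < n" using assms n_def j_def by simp
  have "card {i. y $ i > kth_largest k y} = card {i. i < n \<and> xs ! i > xs ! j}"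
    using card_filter_sorted(1)[of "\<lambda>v. v > kth_largest k y" y] unfolding xs_def[symmetric]
    by (simp add: length_filter_conv_card len Q)
  also have "\<dots> \<le> card {j+1..<n}"
  proof (rule card_mono)
    show "{i. i < n \<and> xs ! i > xs ! j} \<subseteq> {j+1..<n}"
    proof
      fix i assume "i \<in> {i. i < n \<and> xs ! i > xs ! j}"
      then have "i < n" "xs ! i > xs ! j" by auto
      moreover have "\<not> i \<le> j"
      proof
        assume "i \<le> j" then have "xs ! i \<le> xs ! j" using sorted_nth_mono[OF so] jn len by simp
        then show False using \<open>xs ! i > xs ! j\<close> by simp
      qed
      ultimately show "i \<in> {j+1..<n}" by auto
    qed
  qed simp
  also have "\<dots> = k - 1" using assms n_def j_def by simp
  finally show "card {i. y $ i > kth_largest k y} \<le> k - 1" .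
  have "k = card {j..<n}" using assms n_def j_def by simp
  also have "\<dots> \<le> card {i. i < n \<and> xs ! i \<ge> xs ! j}"
  proof (rule card_mono)
    show "{j..<n} \<subseteq> {i. i < n \<and> xs ! i \<ge> xs ! j}"
      using sorted_nth_mono[OF so] len by auto
  qed simp
  also have "\<dots> = card {i. y $ i \<ge> kth_largest k y}"
    using card_filter_sorted(1)[of "\<lambda>v. v \<ge> kth_largest k y" y] unfolding xs_def[symmetric]
    by (simp add: length_filter_conv_card len Q)
  finally show "card {i. y $ i \<ge> kth_largest k y} \<ge> k" .
qed

lemma kth_mono:
  fixes l x :: "real ^ 'n"
  assumes "1 \<le> k" "k \<le> CARD('n)" "\<And>i. l $ i \<le> x $ i"
  shows "kth_largest k l \<le> kth_largest k x"
proof (rule ccontr)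
  assume neg: "\<not> ?thesis"
  have "{i. l $ i \<ge> kth_largest k l} \<subseteq> {i. x $ i > kth_largest k x}"
  proof
    fix i assume "i \<in> {i. l $ i \<ge> kth_largest k l}"
    then show "i \<in> {i. x $ i > kth_largest k x}" using assms(3)[of i] neg by simp
  qed
  then have "card {i. l $ i \<ge> kth_largest k l} \<le> card {i. x $ i > kth_largest k x}"
    by (intro card_mono) auto
  then show False using kth_props[OF assms(1,2), of l] kth_props[OF assms(1,2), of x] assms(1) by linarith
qed

theorem theorem4:
  fixes l u x :: "real ^ 'n" and k :: nat and W :: "'n set" and U :: real
  assumes "1 \<le> k" and "k \<le> CARD('n)"
    and "\<And>i. l $ i \<le> u $ i"
    and "\<And>i. l $ i \<le> x $ i" and "\<And>i. x $ i \<le> u $ i"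
    and "card W \<ge> k"
    and "U > kth_largest k l"
  shows "kth_largest k x \<ge> kth_largest k l
           + (U - kth_largest k l) / real (card W - k + 1)
             * ((\<Sum>i\<in>W. (x $ i - kth_largest k l) / (max U (u $ i) - kth_largest k l))
                - real k + 1)"
proof -
  define L where "L = kth_largest k l"
  define Q where "Q = kth_largest k x"
  define m where "m = card W"
  define r where "r = (Q - L) / (U - L)"
  define t where "t = (\<lambda>i. (x $ i - L) / (max U (u $ i) - L))"
  define A where "A = {i\<in>W. x $ i > Q}"
  have UL: "U - L > 0" using assms(7) L_def by simp
  have QL: "Q \<ge> L" unfolding Q_def L_def using kth_mono[OF assms(1,2,4)] .
  have r0: "r \<ge> 0" using UL QL r_def by simp
  have finW: "finite W" by simp
  have t1: "t i \<le> 1" for i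
  proof -
    have "max U (u $ i) - L > 0" using UL by linarith
    moreover have "x $ i - L \<le> max U (u $ i) - L" using assms(5)[of i] by linarith
    ultimately show ?thesis unfolding t_def by simp
  qed
  have tr: "t i \<le> r" if "x $ i \<le> Q" for i
  proof -
    have d: "max U (u $ i) - L \<ge> U - L" by linarith
    have "t i \<le> (Q - L) / (max U (u $ i) - L)"
      unfolding t_def using that UL d by (intro divide_right_mono) auto
    also have "\<dots> \<le> (Q - L) / (U - L)"
      using QL UL d by (intro divide_left_mono) auto
    finally show ?thesis unfolding r_def .
  qed
  have cardA: "card A \<le> k - 1"
  proof -
    have "card A \<le> card {i. x $ i > Q}" unfolding A_def by (intro card_mono) auto
    then show ?thesis using kth_props(1)[OF assms(1,2), of x] Q_def by simp
  qed
  have AW: "A \<subseteq> W" unfolding A_def by auto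
  have S: "(\<Sum>i\<in>W. t i) \<le> real (k - 1) + real (m - k + 1) * r"
  proof (cases "r \<le> 1")
    case True
    have "(\<Sum>i\<in>W. t i) = (\<Sum>i\<in>A. t i) + (\<Sum>i\<in>W - A. t i)"
      using AW finW by (simp add: sum.subset_diff)
    also have "\<dots> \<le> (\<Sum>i\<in>A. 1) + (\<Sum>i\<in>W - A. r)"
      using t1 tr unfolding A_def by (intro add_mono sum_mono) auto
    also have "\<dots> = real (card A) + real (m - card A) * r"
      using AW finW m_def by (simp add: card_Diff_subset card_mono)
    also have "\<dots> \<le> real (k - 1) + real (m - k + 1) * r"
    proof -
      have "card A \<le> m" using AW finW m_def card_mono by blast
      have "real (card A) + real (m - card A) * r = real (card A) * (1 - r) + real m * r"
        using \<open>card A \<le> m\<close> by (simp add: of_nat_diff algebra_simps)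
      also have "\<dots> \<le> real (k - 1) * (1 - r) + real m * r"
        using cardA True r0 by (intro add_mono mult_right_mono) auto
      also have "\<dots> = real (k - 1) + real (m - k + 1) * r"
        using assms(1,6) m_def by (simp add: of_nat_diff algebra_simps)
      finally show ?thesis .
    qed
    finally show ?thesis .
  next
    case False
    have "(\<Sum>i\<in>W. t i) \<le> (\<Sum>i\<in>W. 1)" using t1 by (intro sum_mono) auto
    also have "\<dots> = real (k - 1) + real (m - k + 1)" using assms(1,6) m_def by (simp add: of_nat_diff)
    also have "\<dots> \<le> real (k - 1) + real (m - k + 1) * r" using False by simp
    finally show ?thesis .
  qed
  have mk: "real (m - k + 1) > 0" by simp
  have "(U - L) / real (m - k + 1) * ((\<Sum>i\<in>W. t i) - real k + 1)
        \<le> (U - L) / real (m - k + 1) * (real (m - k + 1) * r)"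
    using S UL mk assms(1) by (intro mult_left_mono) (auto simp: of_nat_diff)
  also have "\<dots> = (U - L) * r" using mk by simp
  also have "\<dots> = Q - L" using UL unfolding r_def by simp
  finally show ?thesis unfolding Q_def[symmetric] L_def[symmetric] m_def[symmetric] t_def[symmetric]
    by simp
qed

end
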